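(* Let $(M,\rho)$ be a complete metric space, let $f:M\to\mathbb{R}\cup\{+\infty\}$ be proper, lower semicontinuous and bounded below, and let $g:M\to\mathbb{R}$ be continuous with $$|\widetilde\nabla f|(x)>|\widetilde\nabla g|(x)\qquad\text{for all }x\in\operatorname{dom} f\setminus 0\operatorname{Crit} f.$$ Then for every $\varepsilon>0$ and every $x_0\in\operatorname{dom} f$ there exists $x\in\varepsilon\operatorname{Crit} f$ such that $$f(x)\le f(x_0)-\varepsilon\rho(x,x_0)\quad\text{and}\quad f(x_0)-g(x_0)\ge f(x)-g(x).$$ In particular, $f(y)-g(y)\ge\inf_{\varepsilon\operatorname{Crit} f}(f-g)$ for all $y\in\operatorname{dom} f$ and all $\varepsilon>0$.
   Context: $\operatorname{dom} f:=\{x:f(x)<+\infty\}$. $[t]^+:=\max\{0,t\}$ (with $[f(x)-f(y)]^+:=0$ if $f(y)=+\infty$). For $x\in\operatorname{dom} f$, the global slope is $|\widetilde\nabla f|(x):=\sup_{y\neq x}\frac{[f(x)-f(y)]^+}{\rho(x,y)}\in[0,+\infty]$. For $\varepsilon\ge0$, $\varepsilon\operatorname{Crit} f:=\{x\in\operatorname{dom} f:\ |\widetilde\nabla f|(x)\le\varepsilon\}$. *)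

theory Defs
  imports "HOL-Analysis.Analysis"
begin

definition edom :: "('a \<Rightarrow> ereal) \<Rightarrow> 'a set" where
  "edom f = {x. f x < \<infinity>}"

text \<open>If f y = +\<infinity> then f x - f y = -\<infinity> and the positive part is 0, matching the convention.
  The 0 is included so that the supremum over an empty index set is 0.\<close>

definition global_slope :: "('a::metric_space \<Rightarrow> ereal) \<Rightarrow> 'a \<Rightarrow> ereal" where
  "global_slope f x = Sup (insert 0 ((\<lambda>y. max 0 (f x - f y) / ereal (dist x y)) ` {y. y \<noteq> x}))"

definition eps_crit :: "real \<Rightarrow> ('a::metric_space \<Rightarrow> ereal) \<Rightarrow> 'a set" where
  "eps_crit \<epsilon> f = {x \<in> edom f. global_slope f x \<le> ereal \<epsilon>}"

definition lsc :: "('a::topological_space \<Rightarrow> ereal) \<Rightarrow> bool" where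
  "lsc f \<longleftrightarrow> (\<forall>x. f x \<le> Liminf (at x) f)"

end

theory Submission imports Defs begin
lemma ekeland_core:
  fixes F :: "'a::complete_space \<Rightarrow> real" and A :: "'a set"
  assumes aA: "a \<in> A" and eps: "\<epsilon> > 0"
    and clo: "\<And>x. x \<in> A \<Longrightarrow> closed {y\<in>A. F y + \<epsilon> * dist x y \<le> F x}"
    and bdd: "\<And>x. x \<in> A \<Longrightarrow> b \<le> F x"
  shows "\<exists>p\<in>A. \<forall>y\<in>A. F y + \<epsilon> * dist p y \<le> F p \<longrightarrow> y = p"
proof -
  define S where "S x = {y\<in>A. F y + \<epsilon> * dist x y \<le> F x}" for x
  have trans: "z \<in> S x" if "y \<in> S x" "z \<in> S y" for x y z
  proof -
    have "dist x z \<le> dist x y + dist y z" by (rule dist_triangle)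
    hence "\<epsilon> * dist x z \<le> \<epsilon> * dist x y + \<epsilon> * dist y z"
      using eps by (metis distrib_left mult_le_cancel_left_pos)
    thus ?thesis using that by (auto simp: S_def)
  qed
  have selfS: "x \<in> S x" if "x \<in> A" for x using that by (simp add: S_def)
  have bddS: "bdd_below (F ` S x)" for x
    using bdd by (auto simp: S_def bdd_below_def)
  have ex: "\<exists>y. y \<in> S x \<and> F y \<le> Inf (F ` S x) + (1/2)^n" if xA: "x \<in> A" for x n
  proof -
    have "Inf (F ` S x) < Inf (F ` S x) + (1/2)^n" by simp
    moreover have "S x \<noteq> {}" using selfS[OF xA] by blast
    ultimately obtain y where "y \<in> S x" "F y < Inf (F ` S x) + (1/2)^n"
      using cINF_less_iff[of "S x" F, OF _ bddS] by blast
    thus ?thesis by auto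
  qed
  define nxt where "nxt n x = (SOME y. y \<in> S x \<and> F y \<le> Inf (F ` S x) + (1/2)^n)" for n x
  have nxt: "nxt n x \<in> S x \<and> F (nxt n x) \<le> Inf (F ` S x) + (1/2)^n" if "x \<in> A" for n x
    unfolding nxt_def by (rule someI_ex[OF ex[OF that]])
  define xs where "xs = rec_nat a nxt"
  have xs0: "xs 0 = a" and xsS: "xs (Suc n) = nxt n (xs n)" for n by (simp_all add: xs_def)
  have inA: "xs n \<in> A" for n
    by (induction n) (use aA nxt in \<open>auto simp: xs0 xsS S_def\<close>)
  have step: "xs (Suc n) \<in> S (xs n)" "F (xs (Suc n)) \<le> Inf (F ` S (xs n)) + (1/2)^n" for n
    using nxt[OF inA[of n]] by (simp_all add: xsS)
  have mono1: "S (xs (Suc n)) \<subseteq> S (xs n)" for n using trans step by blast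
  have monoS: "S (xs m) \<subseteq> S (xs n)" if "n \<le> m" for m n
    using that by (induction rule: dec_induct) (use mono1 in blast)+
  have small: "\<epsilon> * dist (xs (Suc n)) z \<le> (1/2)^n" if "z \<in> S (xs (Suc n))" for n z
  proof -
    have "z \<in> S (xs n)" using that mono1 by blast
    hence "Inf (F ` S (xs n)) \<le> F z" using bddS by (simp add: cInf_lower)
    with step(2)[of n] that show ?thesis by (simp add: S_def)
  qed
  have small2: "dist (xs (Suc n)) z \<le> (1/2)^n / \<epsilon>" if "z \<in> S (xs (Suc n))" for n z
    using small[OF that] eps by (simp add: field_simps)
  have memS: "xs m \<in> S (xs n)" if "n \<le> m" for m n
    using monoS[OF that] selfS[OF inA[of m]] by blast
  have Cau: "Cauchy xs"
  proof (rule metric_CauchyI)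
    fix e :: real assume e: "e > 0"
    obtain N where N: "(1/2::real)^N < e * \<epsilon> / 2"
      using real_arch_pow_inv[of "e * \<epsilon> / 2" "1/2::real"] e eps by auto
    show "\<exists>M. \<forall>m\<ge>M. \<forall>n\<ge>M. dist (xs m) (xs n) < e"
    proof (intro exI allI impI)
      fix m n assume m: "Suc N \<le> m" and n: "Suc N \<le> n"
      have "dist (xs m) (xs n) \<le> dist (xs (Suc N)) (xs m) + dist (xs (Suc N)) (xs n)"
        by (rule dist_triangle3)
      also have "\<dots> \<le> (1/2)^N / \<epsilon> + (1/2)^N / \<epsilon>"
        using small2[OF memS[OF m]] small2[OF memS[OF n]] by linarith
      also have "\<dots> < e" using N eps by (simp add: field_simps)
      finally show "dist (xs m) (xs n) < e" .
    qed
  qed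
  then obtain p where lim: "xs \<longlonglongrightarrow> p" using Cauchy_convergent_iff convergent_def by blast
  have pS: "p \<in> S (xs n)" for n
  proof (rule Lim_in_closed_set[OF _ _ _ lim])
    show "closed (S (xs n))" using clo inA by (simp add: S_def)
    show "eventually (\<lambda>m. xs m \<in> S (xs n)) sequentially"
      using memS eventually_sequentially by blast
  qed simp
  have pA: "p \<in> A" using pS[of 0] by (simp add: S_def)
  show ?thesis
  proof (intro bexI[OF _ pA] ballI impI)
    fix y assume yA: "y \<in> A" and le: "F y + \<epsilon> * dist p y \<le> F p"
    have yS: "y \<in> S p" using yA le by (simp add: S_def)
    have "dist p y \<le> 2 * (1/2)^n / \<epsilon>" for n
    proof -
      have "dist p y \<le> dist (xs (Suc n)) p + dist (xs (Suc n)) y" by (rule dist_triangle3)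
      also have "\<dots> \<le> (1/2)^n / \<epsilon> + (1/2)^n / \<epsilon>"
        using small2[OF pS[of "Suc n"]] small2[OF trans[OF pS[of "Suc n"] yS]] by linarith
      finally show ?thesis by simp
    qed
    moreover have "dist p y \<le> 0"
    proof (rule ccontr)
      assume "\<not> dist p y \<le> 0"
      hence d: "dist p y > 0" by simp
      obtain n where "(1/2::real)^n < dist p y * \<epsilon> / 2"
        using real_arch_pow_inv[of "dist p y * \<epsilon> / 2" "1/2::real"] d eps by auto
      moreover have "dist p y \<le> 2 * (1/2)^n / \<epsilon>" by fact
      ultimately show False using eps by (simp add: field_simps)
    qed
    ultimately show "y = p" by simp
  qed
qed

lemma lsc_nbhd:
  assumes "lsc f" "ereal a < f y"
  shows "\<exists>e>0. \<forall>z. dist z y < e \<longrightarrow> ereal a < f z"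
proof -
  have "ereal a < Liminf (at y) f" using assms unfolding lsc_def by (meson less_le_trans)
  hence "eventually (\<lambda>z. ereal a < f z) (at y)" by (rule less_LiminfD)
  then obtain d where d: "d > 0" "\<forall>z. 0 < dist z y \<and> dist z y < d \<longrightarrow> ereal a < f z"
    unfolding eventually_at by auto
  show ?thesis using d assms(2) by (metis dist_pos_lt)
qed

lemma ereal_sum_le_conv:
  fixes v :: ereal
  assumes "v \<noteq> -\<infinity>"
  shows "(v + ereal r \<le> ereal c) \<longleftrightarrow> (v \<noteq> \<infinity> \<and> real_of_ereal v + r \<le> c)"
  using assms by (cases v) auto

lemma closed_lsc_sub:
  fixes f :: "'a::metric_space \<Rightarrow> ereal"
  assumes lsc: "lsc f" and cont: "continuous_on UNIV \<phi>"
  shows "closed {y. f y + ereal (\<phi> y) \<le> ereal c}"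
proof -
  have "open (- {y. f y + ereal (\<phi> y) \<le> ereal c})"
    unfolding open_dist
  proof (intro ballI)
    fix y assume "y \<in> - {y. f y + ereal (\<phi> y) \<le> ereal c}"
    hence lt: "ereal c < f y + ereal (\<phi> y)" by auto
    obtain a where a: "c - \<phi> y < a" "ereal a < f y"
    proof (cases "f y")
      case (real r)
      thus ?thesis using lt that[of "(c - \<phi> y + r)/2"] by auto
    next
      case PInf
      thus ?thesis using that[of "c - \<phi> y + 1"] by auto
    next
      case MInf
      thus ?thesis using lt by auto
    qed
    obtain e1 where e1: "e1 > 0" "\<forall>z. dist z y < e1 \<longrightarrow> ereal a < f z"
      using lsc_nbhd[OF lsc a(2)] by blast
    obtain e2 where e2: "e2 > 0" "\<forall>z. dist z y < e2 \<longrightarrow> dist (\<phi> z) (\<phi> y) < a - (c - \<phi> y)"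
      using cont a(1) unfolding continuous_on_iff by (metis UNIV_I diff_gt_0_iff_gt)
    show "\<exists>e>0. \<forall>z. dist z y < e \<longrightarrow> z \<in> - {y. f y + ereal (\<phi> y) \<le> ereal c}"
    proof (intro exI[of _ "min e1 e2"] conjI allI impI)
      show "min e1 e2 > 0" using e1 e2 by simp
      fix z assume "dist z y < min e1 e2"
      hence h1: "ereal a < f z" and h2: "dist (\<phi> z) (\<phi> y) < a - (c - \<phi> y)" using e1 e2 by auto
      have h3: "c < a + \<phi> z" using h2 by (simp add: dist_real_def abs_less_iff)
      show "z \<in> - {y. f y + ereal (\<phi> y) \<le> ereal c}"
        using h1 h3 by (cases "f z") auto
    qed
  qed
  thus ?thesis by (simp add: closed_def)
qed


theorem proposition3p6:
  fixes f :: "'a::complete_space \<Rightarrow> ereal" and g :: "'a \<Rightarrow> real"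
  assumes proper: "edom f \<noteq> {}"
    and lsc_f: "lsc f"
    and bdd_below: "\<exists>b::real. \<forall>x. ereal b \<le> f x"
    and cont_g: "continuous_on UNIV g"
    and slope: "\<forall>x \<in> edom f - eps_crit 0 f.
                  global_slope f x > global_slope (\<lambda>y. ereal (g y)) x"
  shows "(\<forall>\<epsilon>>0. \<forall>x0 \<in> edom f. \<exists>x \<in> eps_crit \<epsilon> f.
            f x \<le> f x0 - ereal (\<epsilon> * dist x x0) \<and>
            f x0 - ereal (g x0) \<ge> f x - ereal (g x))
      \<and> (\<forall>\<epsilon>>0. \<forall>y \<in> edom f.
            f y - ereal (g y) \<ge> (INF x \<in> eps_crit \<epsilon> f. f x - ereal (g x)))"
proof -
  obtain b :: real where b: "\<And>x. ereal b \<le> f x" using bdd_below by blast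
  have fnm: "f x \<noteq> -\<infinity>" for x using b[of x] by auto
  define F where "F x = real_of_ereal (f x)" for x
  have main: "\<exists>x \<in> eps_crit \<epsilon> f. f x \<le> f x0 - ereal (\<epsilon> * dist x x0) \<and>
            f x0 - ereal (g x0) \<ge> f x - ereal (g x)"
    if eps: "\<epsilon> > 0" and x0: "x0 \<in> edom f" for \<epsilon> x0
  proof -
    have fx0: "f x0 = ereal (F x0)" using x0 fnm[of x0] by (cases "f x0") (auto simp: edom_def F_def)
    define A where "A = {y. f y + ereal (\<epsilon> * dist x0 y) \<le> ereal (F x0)} \<inter>
                        {y. f y + ereal (- g y) \<le> ereal (F x0 - g x0)}"
    have memA: "y \<in> A \<longleftrightarrow> f y \<noteq> \<infinity> \<and> F y + \<epsilon> * dist x0 y \<le> F x0 \<and> F y - g y \<le> F x0 - g x0" for y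
      unfolding A_def using ereal_sum_le_conv[OF fnm[of y]] by (auto simp: F_def)
    have finA: "f y = ereal (F y)" if "y \<in> A" for y
      using that memA fnm[of y] by (cases "f y") (auto simp: F_def)
    have x0A: "x0 \<in> A" using memA fx0 by simp
    have cA: "closed A" unfolding A_def
      by (intro closed_Int closed_lsc_sub[OF lsc_f] continuous_intros cont_g)
    have clo: "closed {y\<in>A. F y + \<epsilon> * dist x y \<le> F x}" if "x \<in> A" for x
    proof -
      have "{y\<in>A. F y + \<epsilon> * dist x y \<le> F x} = A \<inter> {y. f y + ereal (\<epsilon> * dist x y) \<le> ereal (F x)}"
        using finA by auto
      thus ?thesis
        by (simp only:) (intro closed_Int cA closed_lsc_sub[OF lsc_f] continuous_intros)
    qed
    have bF: "b \<le> F x" if "x \<in> A" for x using b[of x] finA[OF that] by simp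
    obtain p where pA: "p \<in> A" and pmin: "\<forall>y\<in>A. F y + \<epsilon> * dist p y \<le> F p \<longrightarrow> y = p"
      using ekeland_core[OF x0A eps clo bF] by blast
    have fp: "f p = ereal (F p)" using finA[OF pA] .
    have p1: "F p + \<epsilon> * dist x0 p \<le> F x0" and p2: "F p - g p \<le> F x0 - g x0"
      using pA memA by auto
    have pdom: "p \<in> edom f" using fp by (simp add: edom_def)
    have slp: "global_slope f p \<le> ereal \<epsilon>"
    proof (rule ccontr)
      assume "\<not> global_slope f p \<le> ereal \<epsilon>"
      hence gs: "ereal \<epsilon> < global_slope f p" by simp
      have "p \<notin> eps_crit 0 f" using gs eps unfolding eps_crit_def
      proof (clarify)
        assume "global_slope f p \<le> ereal 0"
        with gs have "ereal \<epsilon> < ereal 0" by (meson less_le_trans)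
        with eps show False by simp
      qed
      hence hg: "global_slope (\<lambda>y. ereal (g y)) p < global_slope f p" using slope pdom by blast
      define t where "t = max (ereal \<epsilon>) (global_slope (\<lambda>y. ereal (g y)) p)"
      have "t < global_slope f p" using gs hg by (simp add: t_def)
      hence "\<exists>z \<in> insert 0 ((\<lambda>y. max 0 (f p - f y) / ereal (dist p y)) ` {y. y \<noteq> p}). t < z"
        unfolding global_slope_def by (simp only: less_Sup_iff[symmetric])
      moreover have "\<not> t < 0" using eps by (simp add: t_def)
      ultimately obtain y where yp: "y \<noteq> p" and ty: "t < max 0 (f p - f y) / ereal (dist p y)"
        by auto
      have d: "dist p y > 0" using yp by simp
      have gle: "max 0 (ereal (g p) - ereal (g y)) / ereal (dist p y) \<le> global_slope (\<lambda>y. ereal (g y)) p"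
        unfolding global_slope_def using yp by (intro Sup_upper) auto
      have fyfin: "f y = ereal (F y)"
      proof (cases "f y")
        case PInf
        hence "max 0 (f p - f y) / ereal (dist p y) = 0" using fp by simp
        thus ?thesis using ty \<open>\<not> t < 0\<close> by simp
      qed (use fnm[of y] in \<open>auto simp: F_def\<close>)
      have e1: "max 0 (f p - f y) / ereal (dist p y) = ereal (max 0 (F p - F y) / dist p y)"
        using fp fyfin d by (simp add: max_def)
      have e2: "max 0 (ereal (g p) - ereal (g y)) / ereal (dist p y) = ereal (max 0 (g p - g y) / dist p y)"
        using d by (simp add: max_def)
      have r1: "\<epsilon> < max 0 (F p - F y) / dist p y" using ty e1 by (simp add: t_def)
      have r2: "max 0 (g p - g y) / dist p y < max 0 (F p - F y) / dist p y"
      proof -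
        have "global_slope (\<lambda>y. ereal (g y)) p < ereal (max 0 (F p - F y) / dist p y)"
          using ty e1 by (simp add: t_def)
        with gle e2 have "ereal (max 0 (g p - g y) / dist p y) < ereal (max 0 (F p - F y) / dist p y)"
          by (metis le_less_trans)
        thus ?thesis by simp
      qed
      have q1: "\<epsilon> * dist p y < F p - F y"
      proof (cases "F p - F y \<le> 0")
        case True hence "max 0 (F p - F y) = 0" by simp
        thus ?thesis using r1 eps by simp
      next
        case False
        hence "\<epsilon> < (F p - F y) / dist p y" using r1 by (simp add: max_def)
        thus ?thesis using d by (simp add: pos_less_divide_eq)
      qed
      have q2: "g p - g y < F p - F y"
      proof -
        have "max 0 (g p - g y) < max 0 (F p - F y)" using r2 d by (simp add: divide_less_cancel)
        thus ?thesis by (simp add: max_def split: if_splits)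
      qed
      have "dist x0 y \<le> dist x0 p + dist p y" by (rule dist_triangle)
      hence "\<epsilon> * dist x0 y \<le> \<epsilon> * dist x0 p + \<epsilon> * dist p y"
        using eps by (metis distrib_left mult_le_cancel_left_pos)
      hence "y \<in> A" using memA fyfin q1 q2 p1 p2 by auto
      moreover have "F y + \<epsilon> * dist p y \<le> F p" using q1 by simp
      ultimately show False using pmin yp by blast
    qed
    have "p \<in> eps_crit \<epsilon> f" using pdom slp by (simp add: eps_crit_def)
    moreover have "f p \<le> f x0 - ereal (\<epsilon> * dist p x0)"
      using fp fx0 p1 by (simp add: dist_commute)
    moreover have "f x0 - ereal (g x0) \<ge> f p - ereal (g p)"
      using fp fx0 p2 by simp
    ultimately show ?thesis by blast
  qed
  show ?thesis
  proof (intro conjI allI impI ballI)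
    fix \<epsilon> :: real and x0 assume "\<epsilon> > 0" "x0 \<in> edom f"
    thus "\<exists>x \<in> eps_crit \<epsilon> f. f x \<le> f x0 - ereal (\<epsilon> * dist x x0) \<and>
            f x0 - ereal (g x0) \<ge> f x - ereal (g x)" by (rule main)
  next
    fix \<epsilon> :: real and y assume "\<epsilon> > 0" "y \<in> edom f"
    then obtain x where "x \<in> eps_crit \<epsilon> f" "f y - ereal (g y) \<ge> f x - ereal (g x)"
      using main by blast
    thus "f y - ereal (g y) \<ge> (INF x \<in> eps_crit \<epsilon> f. f x - ereal (g x))"
      by (meson INF_lower2)
  qed
qed

end
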